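(* Let $\mathbb{H}$ be a reproducing kernel Hilbert space with inner product $\langle\cdot,\cdot\rangle$ and feature map $\phi$, and let $(X,A,Y)$ be jointly distributed with $Y=\langle\phi(X),y\rangle$ and $A=\langle\phi(X),a\rangle$ for some nonzero $y,a\in\mathbb{H}$, with $\operatorname{Var}(Y),\operatorname{Var}(A)>0$; let $\rho_{YA}$ be the correlation coefficient of $Y$ and $A$ and $\ell(u,v)=(u-v)^2$. Let $Z=g(X)$ be any (possibly randomized) representation. If $\operatorname{Var}\mathbb{E}[A\mid Z]=0$, then $$\inf_h\mathbb{E}[\ell(Y,h(Z))]\ge \operatorname{Var}(Y)\cdot\rho_{YA}^2.$$ If $\operatorname{Var}\mathbb{E}[Y\mid Z]=\operatorname{Var}(Y)$, then $$\inf_h\mathbb{E}[\ell(A,h(Z))]\le \operatorname{Var}(A)(1-\rho_{YA}^2).$$ The infima are over measurable functions $h$.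
   Context: A (possibly randomized) representation is $Z=g(X,S)$ for a measurable $g$ and auxiliary randomness $S$ independent of $(X,A,Y)$. $\phi(X)$ is assumed to have finite second moment in $\mathbb{H}$. *)

theory Defs
  imports "HOL-Probability.Probability"
begin

definition covariance :: "'a measure \<Rightarrow> ('a \<Rightarrow> real) \<Rightarrow> ('a \<Rightarrow> real) \<Rightarrow> real" where
  "covariance M U V =
     (\<integral>\<omega>. (U \<omega> - (\<integral>\<omega>'. U \<omega>' \<partial>M)) * (V \<omega> - (\<integral>\<omega>'. V \<omega>' \<partial>M)) \<partial>M)"

definition correlation :: "'a measure \<Rightarrow> ('a \<Rightarrow> real) \<Rightarrow> ('a \<Rightarrow> real) \<Rightarrow> real" where
  "correlation M U V =
     covariance M U V / sqrt (prob_space.variance M U * prob_space.variance M V)"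

text \<open>A feature map of a reproducing kernel Hilbert space: the Hilbert space H is
  identified with a space of functions on the input space via f \<mapsto> (\<lambda>x. \<langle>f, \<phi> x\<rangle>)
  (reproducing property), which must be injective.\<close>

definition rkhs_feature_map :: "('x \<Rightarrow> 'h::{real_inner,complete_space}) \<Rightarrow> bool" where
  "rkhs_feature_map \<phi> \<longleftrightarrow> inj (\<lambda>f. (\<lambda>x. inner f (\<phi> x)))"

definition best_sq_risk :: "'a measure \<Rightarrow> 'z measure \<Rightarrow> ('a \<Rightarrow> 'z) \<Rightarrow> ('a \<Rightarrow> real) \<Rightarrow> ennreal" where
  "best_sq_risk M Mz Z U =
     (INF h\<in>borel_measurable Mz. \<integral>\<^sup>+ \<omega>. ennreal ((U \<omega> - h (Z \<omega>))\<^sup>2) \<partial>M)"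

end

theory Submission
  imports Defs
begin


lemma L2_mult:
  fixes f g :: "'a \<Rightarrow> real"
  assumes [measurable]: "f \<in> borel_measurable M" "g \<in> borel_measurable M"
    and "integrable M (\<lambda>x. (f x)\<^sup>2)" "integrable M (\<lambda>x. (g x)\<^sup>2)"
  shows "integrable M (\<lambda>x. f x * g x)"
proof (rule Bochner_Integration.integrable_bound[where f="\<lambda>x. (f x)\<^sup>2 + (g x)\<^sup>2"])
  show "integrable M (\<lambda>x. (f x)\<^sup>2 + (g x)\<^sup>2)" using assms by auto
  show "AE x in M. norm (f x * g x) \<le> norm ((f x)\<^sup>2 + (g x)\<^sup>2)"
  proof (rule AE_I2)
    fix x
    have "2 * \<bar>f x\<bar> * \<bar>g x\<bar> \<le> (f x)\<^sup>2 + (g x)\<^sup>2"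
      using sum_squares_bound[of "\<bar>f x\<bar>" "\<bar>g x\<bar>"] by (simp add: power2_eq_square)
    then show "norm (f x * g x) \<le> norm ((f x)\<^sup>2 + (g x)\<^sup>2)"
    proof -
      have "norm (f x * g x) = \<bar>f x\<bar> * \<bar>g x\<bar>" by (simp add: abs_mult)
      also have "\<dots> \<le> (f x)\<^sup>2 + (g x)\<^sup>2" using \<open>2 * \<bar>f x\<bar> * \<bar>g x\<bar> \<le> _\<close>
      proof -
        have p: "0 \<le> \<bar>f x\<bar> * \<bar>g x\<bar>" by simp
        have "\<bar>f x\<bar> * \<bar>g x\<bar> \<le> 2 * \<bar>f x\<bar> * \<bar>g x\<bar>" using p by simp
        then show ?thesis using \<open>2 * \<bar>f x\<bar> * \<bar>g x\<bar> \<le> _\<close> by (rule order_trans)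
      qed
      also have "\<dots> \<le> norm ((f x)\<^sup>2 + (g x)\<^sup>2)" by simp
      finally show ?thesis .
    qed
  qed
qed auto

lemma (in prob_space) L2_int:
  fixes f :: "'a \<Rightarrow> real"
  assumes [measurable]: "f \<in> borel_measurable M" and "integrable M (\<lambda>x. (f x)\<^sup>2)"
  shows "integrable M f"
  using L2_mult[of f M "\<lambda>_. 1"] assms by simp

lemma L2_add:
  fixes f g :: "'a \<Rightarrow> real"
  assumes [measurable]: "f \<in> borel_measurable M" "g \<in> borel_measurable M"
    and "integrable M (\<lambda>x. (f x)\<^sup>2)" "integrable M (\<lambda>x. (g x)\<^sup>2)"
  shows "integrable M (\<lambda>x. (f x + g x)\<^sup>2)"
proof -
  have "integrable M (\<lambda>x. (f x)\<^sup>2 + 2 * (f x * g x) + (g x)\<^sup>2)"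
    using L2_mult[OF assms] assms by auto
  moreover have "(\<lambda>x. (f x + g x)\<^sup>2) = (\<lambda>x. (f x)\<^sup>2 + 2 * (f x * g x) + (g x)\<^sup>2)"
    by (auto simp: power2_sum)
  ultimately show ?thesis by simp
qed

lemma L2_scale:
  fixes f :: "'a \<Rightarrow> real"
  assumes "integrable M (\<lambda>x. (f x)\<^sup>2)"
  shows "integrable M (\<lambda>x. (c * f x)\<^sup>2)"
  using integrable_mult_right[OF assms, of "c\<^sup>2"] by (simp add: power_mult_distrib)

lemma (in prob_space) L2_const:
  shows "integrable M (\<lambda>x. (c::real)\<^sup>2)"
  by simp

lemma doob_dynkin_real:
  fixes f :: "'a \<Rightarrow> real"
  assumes Z: "Z \<in> X \<rightarrow> space N" and f: "f \<in> borel_measurable (vimage_algebra X Z N)"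
  shows "\<exists>h \<in> borel_measurable N. \<forall>x\<in>X. f x = h (Z x)"
proof -
  have "\<forall>q::rat. \<exists>B. B \<in> sets N \<and> Z -` B \<inter> X = {x\<in>X. f x < of_rat q}"
  proof
    fix q :: rat
    have [measurable]: "f \<in> borel_measurable (vimage_algebra X Z N)" by (rule f)
    have "{x\<in>space (vimage_algebra X Z N). f x < of_rat q} \<in> sets (vimage_algebra X Z N)"
      by measurable
    then have "{x\<in>X. f x < of_rat q} \<in> sets (vimage_algebra X Z N)" by simp
    then show "\<exists>B. B \<in> sets N \<and> Z -` B \<inter> X = {x\<in>X. f x < of_rat q}"
      unfolding sets_vimage_algebra2[OF Z] by blast
  qed
  then obtain B where B: "\<And>q. B q \<in> sets N" "\<And>q. Z -` B q \<inter> X = {x\<in>X. f x < of_rat q}"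
    by metis
  define h' where "h' z = (INF q\<in>UNIV. if z \<in> B q then ereal (of_rat q) else \<infinity>)" for z
  have [measurable]: "\<And>q. B q \<in> sets N" using B by auto
  have "h' \<in> borel_measurable N" unfolding h'_def by measurable
  then have hm: "(\<lambda>z. real_of_ereal (h' z)) \<in> borel_measurable N" by measurable
  have pt: "f x = real_of_ereal (h' (Z x))" if x: "x \<in> X" for x
  proof -
    have mem: "Z x \<in> B q \<longleftrightarrow> f x < of_rat q" for q
    proof -
      have "Z x \<in> B q \<longleftrightarrow> x \<in> Z -` B q \<inter> X" using x by simp
      also have "\<dots> \<longleftrightarrow> x \<in> {x\<in>X. f x < of_rat q}" by (simp only: B(2))
      finally show ?thesis using x by simp
    qed
    have "h' (Z x) = ereal (f x)"
    proof (rule antisym)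
      show "ereal (f x) \<le> h' (Z x)"
        unfolding h'_def by (rule INF_greatest) (auto simp: mem)
      show "h' (Z x) \<le> ereal (f x)"
      proof (rule dense_ge)
        fix y assume y: "ereal (f x) < y"
        obtain r where r: "f x < r" "ereal r < y"
        proof (cases y)
          case (real t)
          then show ?thesis using y that[of "(f x + t) / 2"] by auto
        next
          case PInf then show ?thesis using that[of "f x + 1"] by auto
        next
          case MInf then show ?thesis using y by auto
        qed
        obtain s where s: "s \<in> \<rat>" "f x < s" "s < r" using Rats_dense_in_real[OF r(1)] by blast
        then obtain q where q: "s = of_rat q" by (auto elim: Rats_cases)
        have "h' (Z x) \<le> ereal (of_rat q)"
          unfolding h'_def by (rule INF_lower2[of q]) (auto simp: mem s q[symmetric])
        also have "\<dots> \<le> y" proof -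
          have "ereal (of_rat q) < ereal r" using s q by simp
          then show ?thesis by (rule less_imp_le[OF less_trans[OF _ r(2)]])
        qed
        finally show "h' (Z x) \<le> y" .
      qed
    qed
    then show ?thesis by simp
  qed
  show ?thesis
    by (rule bexI[where x="\<lambda>z. real_of_ereal (h' z)"]) (use pt hm in auto)
qed



lemma (in prob_space) cond_sq_int:
  fixes A :: "'a \<Rightarrow> real"
  assumes sub: "sigma_finite_subalgebra M F"
    and [measurable]: "A \<in> borel_measurable M" and A2: "integrable M (\<lambda>x. (A x)\<^sup>2)"
  shows "integrable M (\<lambda>x. (real_cond_exp M F A x)\<^sup>2)"
proof -
  interpret sigma_finite_subalgebra M F by (rule sub)
  have Ai: "integrable M A" by (rule L2_int[OF _ A2]) simp
  have "AE x in M. (real_cond_exp M F A x)\<^sup>2 \<le> real_cond_exp M F (\<lambda>x. (A x)\<^sup>2) x"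
    using real_cond_exp_jensens_inequality(2)[OF Ai, of UNIV _ _ power2] A2 convex_power2
    by auto
  show ?thesis
  proof (rule Bochner_Integration.integrable_bound[where f="real_cond_exp M F (\<lambda>x. (A x)\<^sup>2)"])
    show "integrable M (real_cond_exp M F (\<lambda>x. (A x)\<^sup>2))" using A2 by (rule real_cond_exp_int)
    show "AE x in M. norm ((real_cond_exp M F A x)\<^sup>2) \<le> norm (real_cond_exp M F (\<lambda>x. (A x)\<^sup>2) x)"
      using \<open>AE x in M. _ \<le> _\<close> by eventually_elim auto
  qed simp
qed



lemma (in prob_space) part1:
  fixes Y A H :: "'a \<Rightarrow> real"
  assumes sub: "sigma_finite_subalgebra M F"
    and [measurable]: "Y \<in> borel_measurable M" "A \<in> borel_measurable M" "H \<in> borel_measurable F"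
    and Y2: "integrable M (\<lambda>x. (Y x)\<^sup>2)" and A2: "integrable M (\<lambda>x. (A x)\<^sup>2)"
    and vA: "variance A > 0"
    and v0: "variance (real_cond_exp M F A) = 0"
  shows "ennreal ((covariance M Y A)\<^sup>2 / variance A) \<le> (\<integral>\<^sup>+x. ennreal ((Y x - H x)\<^sup>2) \<partial>M)"
proof -
  interpret S: sigma_finite_subalgebra M F by (rule sub)
  have [measurable]: "H \<in> borel_measurable M" by (rule measurable_from_subalg[OF S.subalg]) fact
  show ?thesis
  proof (cases "integrable M (\<lambda>x. (Y x - H x)\<^sup>2)")
    case False
    then have "(\<integral>\<^sup>+x. ennreal ((Y x - H x)\<^sup>2) \<partial>M) = \<infinity>"
      by (simp add: integrable_iff_bounded less_top[symmetric])
    then show ?thesis by simp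
  next
    case True
    define W where "W x = Y x - H x" for x
    define C where "C = real_cond_exp M F A"
    define a' where "a' x = A x - expectation A" for x
    define cv where "cv = covariance M Y A"
    define VA where "VA = variance A"
    have [measurable]: "W \<in> borel_measurable M" "C \<in> borel_measurable M" "a' \<in> borel_measurable M"
      unfolding W_def C_def a'_def by measurable
    have W2: "integrable M (\<lambda>x. (W x)\<^sup>2)" using True by (simp add: W_def)
    have H2: "integrable M (\<lambda>x. (H x)\<^sup>2)"
    proof -
      have "integrable M (\<lambda>x. (Y x + (-1) * W x)\<^sup>2)"
        by (rule L2_add) (use Y2 W2 in auto)
      then show ?thesis by (simp add: W_def)
    qed
    have C2: "integrable M (\<lambda>x. (C x)\<^sup>2)" unfolding C_def by (rule cond_sq_int[OF sub _ A2]) simp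
    have a'2: "integrable M (\<lambda>x. (a' x)\<^sup>2)" unfolding a'_def
      using L2_add[of A M "\<lambda>_. - expectation A"] A2 by simp
    have Yi: "integrable M Y" by (rule L2_int[OF _ Y2]) simp
    have Ai: "integrable M A" by (rule L2_int[OF _ A2]) simp
    have Hi: "integrable M H" by (rule L2_int[OF _ H2]) simp
    have Wi: "integrable M W" by (rule L2_int[OF _ W2]) simp
    have a'i: "integrable M a'" by (rule L2_int[OF _ a'2]) simp
    have HA: "integrable M (\<lambda>x. H x * A x)" by (rule L2_mult) (use H2 A2 in auto)
    have Wa: "integrable M (\<lambda>x. W x * a' x)" by (rule L2_mult) (use W2 a'2 in auto)
    have Ya: "integrable M (\<lambda>x. Y x * a' x)" by (rule L2_mult) (use Y2 a'2 in auto)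
    have Ha: "integrable M (\<lambda>x. H x * a' x)" by (rule L2_mult) (use H2 a'2 in auto)
    define c where "c = expectation C"
    have cA: "c = expectation A" unfolding c_def C_def using S.real_cond_exp_int(2)[OF Ai] .
    have "AE x in M. (C x - c)\<^sup>2 = 0"
    proof (subst integral_nonneg_eq_0_iff_AE[symmetric])
      show "integrable M (\<lambda>x. (C x - c)\<^sup>2)" using L2_add[of C M "\<lambda>_. - c"] C2 by simp
      show "expectation (\<lambda>x. (C x - c)\<^sup>2) = 0" using v0 by (simp add: C_def c_def)
    qed auto
    then have Cc: "AE x in M. C x = c" by auto
    have "expectation (\<lambda>x. H x * A x) = expectation (\<lambda>x. H x * C x)"
      unfolding C_def using S.real_cond_exp_intg(2)[OF HA] by simp
    also have "\<dots> = expectation (\<lambda>x. c * H x)"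
      by (rule integral_cong_AE) (use Cc in auto)
    also have "\<dots> = c * expectation H" by simp
    finally have EHA: "expectation (\<lambda>x. H x * A x) = c * expectation H" .
    have Ea': "expectation a' = 0" unfolding a'_def using Ai prob_space by simp
    have "expectation (\<lambda>x. H x * a' x) = expectation (\<lambda>x. H x * A x - expectation A * H x)"
      unfolding a'_def by (simp add: algebra_simps)
    also have "\<dots> = 0" using HA Hi EHA cA by simp
    finally have EHa: "expectation (\<lambda>x. H x * a' x) = 0" .
    have "cv = expectation (\<lambda>x. Y x * a' x - expectation Y * a' x)"
      unfolding cv_def covariance_def a'_def by (simp add: algebra_simps)
    also have "\<dots> = expectation (\<lambda>x. Y x * a' x)" using Ya a'i Ea' by simp
    finally have EYa: "expectation (\<lambda>x. Y x * a' x) = cv" by simp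
    have EWa: "expectation (\<lambda>x. W x * a' x) = cv"
    proof -
      have "expectation (\<lambda>x. W x * a' x) = expectation (\<lambda>x. Y x * a' x - H x * a' x)"
        unfolding W_def by (simp add: algebra_simps)
      also have "\<dots> = cv" using Ya Ha EYa EHa by simp
      finally show ?thesis .
    qed
    have VAe: "VA = expectation (\<lambda>x. (a' x)\<^sup>2)" unfolding VA_def a'_def by simp
    have VApos: "VA > 0" using vA VA_def by simp
    define t where "t = cv / VA"
    have "0 \<le> expectation (\<lambda>x. (W x - t * a' x)\<^sup>2)" by simp
    also have "expectation (\<lambda>x. (W x - t * a' x)\<^sup>2)
        = expectation (\<lambda>x. (W x)\<^sup>2 - (2 * t) * (W x * a' x) + t\<^sup>2 * (a' x)\<^sup>2)"
      by (simp add: power2_diff algebra_simps power_mult_distrib)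
    also have "\<dots> = expectation (\<lambda>x. (W x)\<^sup>2) - (2 * t) * cv + t\<^sup>2 * VA"
      using W2 Wa a'2 EWa VAe by simp
    also have "\<dots> = expectation (\<lambda>x. (W x)\<^sup>2) - cv\<^sup>2 / VA"
      using VApos unfolding t_def by (simp add: field_simps power2_eq_square)
    finally have ineq: "cv\<^sup>2 / VA \<le> expectation (\<lambda>x. (W x)\<^sup>2)" by simp
    have "(\<integral>\<^sup>+x. ennreal ((Y x - H x)\<^sup>2) \<partial>M) = ennreal (expectation (\<lambda>x. (W x)\<^sup>2))"
      unfolding W_def by (rule nn_integral_eq_integral) (use True in auto)
    then show ?thesis using ineq unfolding cv_def VA_def by (simp add: ennreal_leI)
  qed
qed



lemma (in prob_space) part2:
  fixes Y A G :: "'a \<Rightarrow> real"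
  assumes sub: "sigma_finite_subalgebra M F"
    and [measurable]: "Y \<in> borel_measurable M" "A \<in> borel_measurable M" "G \<in> borel_measurable M"
    and Y2: "integrable M (\<lambda>x. (Y x)\<^sup>2)" and A2: "integrable M (\<lambda>x. (A x)\<^sup>2)"
    and vY: "variance Y > 0"
    and vv: "variance (real_cond_exp M F Y) = variance Y"
    and t_def: "t = covariance M Y A / variance Y"
    and G: "AE x in M. G x = expectation A + t * (real_cond_exp M F Y x - expectation Y)"
  shows "(\<integral>\<^sup>+x. ennreal ((A x - G x)\<^sup>2) \<partial>M) = ennreal (variance A - (covariance M Y A)\<^sup>2 / variance Y)"
proof -
  interpret S: sigma_finite_subalgebra M F by (rule sub)
  define C where "C = real_cond_exp M F Y"
  have CF[measurable]: "C \<in> borel_measurable F" unfolding C_def by simp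
  have [measurable]: "C \<in> borel_measurable M" unfolding C_def by simp
  have C2: "integrable M (\<lambda>x. (C x)\<^sup>2)" unfolding C_def by (rule cond_sq_int[OF sub _ Y2]) simp
  have Yi: "integrable M Y" by (rule L2_int[OF _ Y2]) simp
  have Ai: "integrable M A" by (rule L2_int[OF _ A2]) simp
  have Ci: "integrable M C" by (rule L2_int[OF _ C2]) simp
  have CY: "integrable M (\<lambda>x. C x * Y x)" by (rule L2_mult) (use C2 Y2 in auto)
  have CC: "expectation (\<lambda>x. C x * C x) = expectation (\<lambda>x. C x * Y x)"
    unfolding C_def using S.real_cond_exp_intg(2)[OF CY[unfolded C_def]] by simp
  have EC: "expectation C = expectation Y" unfolding C_def using S.real_cond_exp_int(2)[OF Yi] .
  have VY: "variance Y = expectation (\<lambda>x. (Y x)\<^sup>2) - (expectation Y)\<^sup>2"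
    by (rule variance_eq[OF Yi Y2])
  have VC: "variance C = expectation (\<lambda>x. (C x)\<^sup>2) - (expectation C)\<^sup>2"
    by (rule variance_eq[OF Ci C2])
  have "expectation (\<lambda>x. (Y x - C x)\<^sup>2) = expectation (\<lambda>x. (Y x)\<^sup>2 - 2 * (C x * Y x) + (C x)\<^sup>2)"
    by (simp add: power2_diff algebra_simps)
  also have "\<dots> = expectation (\<lambda>x. (Y x)\<^sup>2) - 2 * expectation (\<lambda>x. C x * Y x) + expectation (\<lambda>x. (C x)\<^sup>2)"
    using Y2 CY C2 by simp
  also have "\<dots> = 0"
    using CC VY VC EC vv unfolding C_def[symmetric] by (simp add: power2_eq_square)
  finally have E0: "expectation (\<lambda>x. (Y x - C x)\<^sup>2) = 0" .
  have "integrable M (\<lambda>x. (Y x + (-1) * C x)\<^sup>2)"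
    by (rule L2_add) (use Y2 C2 in auto)
  then have YC2: "integrable M (\<lambda>x. (Y x - C x)\<^sup>2)" by simp
  have "AE x in M. (Y x - C x)\<^sup>2 = 0"
    using integral_nonneg_eq_0_iff_AE[OF YC2] E0 by simp
  then have YC: "AE x in M. Y x = C x" by auto
  define a' where "a' x = A x - expectation A" for x
  define y' where "y' x = Y x - expectation Y" for x
  have [measurable]: "a' \<in> borel_measurable M" "y' \<in> borel_measurable M"
    unfolding a'_def y'_def by measurable
  have a'2: "integrable M (\<lambda>x. (a' x)\<^sup>2)" unfolding a'_def
    using L2_add[of A M "\<lambda>_. - expectation A"] A2 by simp
  have y'2: "integrable M (\<lambda>x. (y' x)\<^sup>2)" unfolding y'_def
    using L2_add[of Y M "\<lambda>_. - expectation Y"] Y2 by simp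
  have ay: "integrable M (\<lambda>x. a' x * y' x)" by (rule L2_mult) (use a'2 y'2 in auto)
  have cv: "covariance M Y A = expectation (\<lambda>x. a' x * y' x)"
    unfolding covariance_def a'_def y'_def by (simp add: mult.commute)
  have VA: "variance A = expectation (\<lambda>x. (a' x)\<^sup>2)" unfolding a'_def by simp
  have VY': "variance Y = expectation (\<lambda>x. (y' x)\<^sup>2)" unfolding y'_def by simp
  have AEeq: "AE x in M. (A x - G x)\<^sup>2 = (a' x + (-t) * y' x)\<^sup>2"
    using G YC
  proof eventually_elim
    case (elim x)
    then have Gx: "G x = expectation A + t * (Y x - expectation Y)" by (simp add: C_def)
    show ?case unfolding Gx a'_def y'_def by (simp add: algebra_simps)
  qed
  have int: "integrable M (\<lambda>x. (a' x + (-t) * y' x)\<^sup>2)"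
    by (rule L2_add) (use a'2 L2_scale[OF y'2] in auto)
  have "(\<integral>\<^sup>+x. ennreal ((A x - G x)\<^sup>2) \<partial>M) = (\<integral>\<^sup>+x. ennreal ((a' x + (-t) * y' x)\<^sup>2) \<partial>M)"
    by (rule nn_integral_cong_AE) (use AEeq in auto)
  also have "\<dots> = ennreal (expectation (\<lambda>x. (a' x + (-t) * y' x)\<^sup>2))"
    by (rule nn_integral_eq_integral) (use int in auto)
  also have "expectation (\<lambda>x. (a' x + (-t) * y' x)\<^sup>2)
      = expectation (\<lambda>x. (a' x)\<^sup>2 - (2 * t) * (a' x * y' x) + t\<^sup>2 * (y' x)\<^sup>2)"
    by (intro arg_cong[where f="integral\<^sup>L M"] ext) (simp add: power2_eq_square algebra_simps)
  also have "\<dots> = expectation (\<lambda>x. (a' x)\<^sup>2) - (2 * t) * expectation (\<lambda>x. a' x * y' x)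
        + t\<^sup>2 * expectation (\<lambda>x. (y' x)\<^sup>2)"
    using a'2 ay y'2 by simp
  also have "\<dots> = variance A - (covariance M Y A)\<^sup>2 / variance Y"
    using vY unfolding VA VY' cv t_def by (simp add: field_simps power2_eq_square)
  finally show ?thesis .
qed



theorem corollary3:
  fixes M :: "'w measure" and Mx :: "'x measure" and Ms :: "'s measure" and Mz :: "'z measure"
    and X :: "'w \<Rightarrow> 'x" and S :: "'w \<Rightarrow> 's" and g :: "'x \<times> 's \<Rightarrow> 'z"
    and \<phi> :: "'x \<Rightarrow> 'h::{real_inner,complete_space}"
    and y a :: 'h and Y A :: "'w \<Rightarrow> real"
  assumes P: "prob_space M"
    and rkhs: "rkhs_feature_map \<phi>"
    and X_meas: "X \<in> measurable M Mx"
    and phiX_meas: "(\<lambda>\<omega>. \<phi> (X \<omega>)) \<in> borel_measurable M"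
    and phiX_L2: "integrable M (\<lambda>\<omega>. (norm (\<phi> (X \<omega>)))\<^sup>2)"
    and Y_def: "\<And>\<omega>. Y \<omega> = inner (\<phi> (X \<omega>)) y"
    and A_def: "\<And>\<omega>. A \<omega> = inner (\<phi> (X \<omega>)) a"
    and y_nz: "y \<noteq> 0" and a_nz: "a \<noteq> 0"
    and varY_pos: "prob_space.variance M Y > 0"
    and varA_pos: "prob_space.variance M A > 0"
    and S_meas: "S \<in> measurable M Ms"
    and S_indep: "prob_space.indep_set M (sets (vimage_algebra (space M) S Ms))
         (sets (vimage_algebra (space M) (\<lambda>\<omega>. (X \<omega>, A \<omega>, Y \<omega>)) (Mx \<Otimes>\<^sub>M (borel \<Otimes>\<^sub>M borel))))"
    and g_meas: "g \<in> measurable (Mx \<Otimes>\<^sub>M Ms) Mz"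
  defines "Z \<equiv> (\<lambda>\<omega>. g (X \<omega>, S \<omega>))"
  shows
    "(prob_space.variance M (real_cond_exp M (vimage_algebra (space M) Z Mz) A) = 0 \<longrightarrow>
        best_sq_risk M Mz Z Y \<ge> ennreal (prob_space.variance M Y * (correlation M Y A)\<^sup>2))
     \<and>
     (prob_space.variance M (real_cond_exp M (vimage_algebra (space M) Z Mz) Y) = prob_space.variance M Y \<longrightarrow>
        best_sq_risk M Mz Z A \<le> ennreal (prob_space.variance M A * (1 - (correlation M Y A)\<^sup>2)))"
proof -
  interpret P: prob_space M by (rule P)
  have Zm[measurable]: "Z \<in> measurable M Mz"
    unfolding Z_def using g_meas X_meas S_meas by measurable
  define F where "F = vimage_algebra (space M) Z Mz"
  have ZF: "Z \<in> space M \<rightarrow> space Mz" using Zm by (simp add: measurable_def)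
  have ZFm: "Z \<in> measurable F Mz" unfolding F_def by (rule measurable_vimage_algebra1[OF ZF])
  have subalg: "subalgebra M F"
    unfolding subalgebra_def F_def using sets_image_in_sets[OF refl Zm] by simp
  have sub: "sigma_finite_subalgebra M F"
    by (rule finite_measure_subalgebra_is_sigma_finite)
      (simp add: finite_measure_subalgebra_def finite_measure_subalgebra_axioms_def subalg P.finite_measure_axioms)
  have im[measurable]: "(\<lambda>\<omega>. inner (\<phi> (X \<omega>)) v) \<in> borel_measurable M" for v
    by (rule borel_measurable_continuous_on[OF _ phiX_meas]) (intro continuous_intros)
  have Yeq: "Y = (\<lambda>\<omega>. inner (\<phi> (X \<omega>)) y)" using Y_def by auto
  have Aeq: "A = (\<lambda>\<omega>. inner (\<phi> (X \<omega>)) a)" using A_def by auto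
  have Ym[measurable]: "Y \<in> borel_measurable M" unfolding Yeq by (rule im)
  have Am[measurable]: "A \<in> borel_measurable M" unfolding Aeq by (rule im)
  have sq: "integrable M (\<lambda>\<omega>. (inner (\<phi> (X \<omega>)) v)\<^sup>2)" for v
  proof (rule Bochner_Integration.integrable_bound[where f="\<lambda>\<omega>. (norm v)\<^sup>2 * (norm (\<phi> (X \<omega>)))\<^sup>2"])
    show "integrable M (\<lambda>\<omega>. (norm v)\<^sup>2 * (norm (\<phi> (X \<omega>)))\<^sup>2)" using phiX_L2 by simp
    show "(\<lambda>\<omega>. (inner (\<phi> (X \<omega>)) v)\<^sup>2) \<in> borel_measurable M" by measurable
    show "AE \<omega> in M. norm ((inner (\<phi> (X \<omega>)) v)\<^sup>2) \<le> norm ((norm v)\<^sup>2 * (norm (\<phi> (X \<omega>)))\<^sup>2)"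
    proof (rule AE_I2)
      fix \<omega>
      have "\<bar>inner (\<phi> (X \<omega>)) v\<bar> \<le> norm (\<phi> (X \<omega>)) * norm v" by (rule Cauchy_Schwarz_ineq2)
      then have "\<bar>inner (\<phi> (X \<omega>)) v\<bar>\<^sup>2 \<le> (norm (\<phi> (X \<omega>)) * norm v)\<^sup>2"
        by (rule power_mono) simp
      then show "norm ((inner (\<phi> (X \<omega>)) v)\<^sup>2) \<le> norm ((norm v)\<^sup>2 * (norm (\<phi> (X \<omega>)))\<^sup>2)"
        by (simp add: power_mult_distrib mult.commute)
    qed
  qed
  have Y2: "integrable M (\<lambda>x. (Y x)\<^sup>2)" using sq[of y] by (simp add: Y_def)
  have A2: "integrable M (\<lambda>x. (A x)\<^sup>2)" using sq[of a] by (simp add: A_def)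
  define cv where "cv = covariance M Y A"
  define VY where "VY = P.variance Y"
  define VA where "VA = P.variance A"
  have VYp: "VY > 0" and VAp: "VA > 0" using varY_pos varA_pos by (simp_all add: VY_def VA_def)
  have corr2: "(correlation M Y A)\<^sup>2 = cv\<^sup>2 / (VY * VA)"
    unfolding correlation_def cv_def[symmetric] VY_def[symmetric] VA_def[symmetric]
    using VYp VAp by (simp add: power_divide)
  show ?thesis
  proof (intro conjI impI)
    assume v0: "P.variance (real_cond_exp M (vimage_algebra (space M) Z Mz) A) = 0"
    have "ennreal (P.variance Y * (correlation M Y A)\<^sup>2) = ennreal (cv\<^sup>2 / VA)"
      using VYp by (simp add: corr2 VY_def[symmetric])
    also have "\<dots> \<le> best_sq_risk M Mz Z Y"
      unfolding best_sq_risk_def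
    proof (rule INF_greatest)
      fix h :: "'z \<Rightarrow> real" assume h: "h \<in> borel_measurable Mz"
      have HF: "(\<lambda>\<omega>. h (Z \<omega>)) \<in> borel_measurable F" using measurable_comp[OF ZFm h] by (simp add: comp_def)
      show "ennreal (cv\<^sup>2 / VA) \<le> (\<integral>\<^sup>+ \<omega>. ennreal ((Y \<omega> - h (Z \<omega>))\<^sup>2) \<partial>M)"
        unfolding cv_def VA_def
        by (rule P.part1[OF sub Ym Am HF Y2 A2 varA_pos]) (use v0 in \<open>simp add: F_def\<close>)
    qed
    finally show "ennreal (P.variance Y * (correlation M Y A)\<^sup>2) \<le> best_sq_risk M Mz Z Y" .
  next
    assume vv: "P.variance (real_cond_exp M (vimage_algebra (space M) Z Mz) Y) = P.variance Y"
    have CF: "real_cond_exp M F Y \<in> borel_measurable F" by simp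
    obtain h where h: "h \<in> borel_measurable Mz" and hC: "\<And>x. x \<in> space M \<Longrightarrow> real_cond_exp M F Y x = h (Z x)"
      using doob_dynkin_real[OF ZF CF[unfolded F_def]] unfolding F_def by blast
    define t where "t = cv / VY"
    define h2 where "h2 z = P.expectation A + t * (h z - P.expectation Y)" for z
    have h2m: "h2 \<in> borel_measurable Mz" unfolding h2_def using h by measurable
    have Gm: "(\<lambda>x. h2 (Z x)) \<in> borel_measurable M" using measurable_comp[OF Zm h2m] by (simp add: comp_def)
    have G: "AE x in M. h2 (Z x) = P.expectation A + t * (real_cond_exp M F Y x - P.expectation Y)"
      by (rule AE_I2) (simp add: h2_def hC)
    have "best_sq_risk M Mz Z A \<le> (\<integral>\<^sup>+ \<omega>. ennreal ((A \<omega> - h2 (Z \<omega>))\<^sup>2) \<partial>M)"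
      unfolding best_sq_risk_def by (rule INF_lower[OF h2m])
    also have "\<dots> = ennreal (VA - cv\<^sup>2 / VY)"
      unfolding VA_def cv_def VY_def
      by (rule P.part2[OF sub Ym Am Gm Y2 A2 varY_pos _ _ G])
        (use vv t_def in \<open>simp_all add: F_def cv_def VY_def\<close>)
    also have "VA - cv\<^sup>2 / VY = P.variance A * (1 - (correlation M Y A)\<^sup>2)"
      using VYp VAp by (simp add: corr2 VA_def[symmetric] field_simps)
    finally show "best_sq_risk M Mz Z A \<le> ennreal (P.variance A * (1 - (correlation M Y A)\<^sup>2))" .
  qed
qed

end
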